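(* Let $M$ be a known finite-horizon reward-free MDP, $\Pi\subseteq\Pi_{\mathrm{RNS}}$, $\varepsilon\in[0,1]$, $h\in[H]$, and $\mu\in\Delta(\mathcal{X}\times\mathcal{A})$ with $C_\infty\equiv C^M_{\infty;h}(\mu)$. Consider the following procedure: set $T=\varepsilon^{-1}$; for $t=1,\dots,T$, compute $\pi^{(t)}\in\Pi$ such that $$\mathbb{E}^{M,\pi^{(t)}}\Big[\frac{\mu(x_h,a_h)}{\sum_{i<t}d^{M,\pi^{(i)}}_h(x_h,a_h)+C_\infty\mu(x_h,a_h)}\Big]\ge\sup_{\pi\in\Pi}\mathbb{E}^{M,\pi}\Big[\frac{\mu(x_h,a_h)}{\sum_{i<t}d^{M,\pi^{(i)}}_h(x_h,a_h)+C_\infty\mu(x_h,a_h)}\Big]-\varepsilon_{\mathrm{opt}};$$ return $p=\mathrm{Unif}(\pi^{(1)},\dots,\pi^{(T)})$. Whenever $\varepsilon_{\mathrm{opt}}\le\varepsilon\log(2\varepsilon^{-1})$, the output $p\in\Delta(\Pi)$ satisfies $|\mathrm{supp}(p)|\le\varepsilon^{-1}$ and $$\Psi^M_{\mu;h,\varepsilon}(p)\le 3\log(2\varepsilon^{-1}),$$ and consequently $\Psi^M_{h,\varepsilon}(p)\le 6C_\infty\log(2\varepsilon^{-1})$.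
   Context: Episodic reward-free MDP $M$ (countable states $\mathcal{X}$, actions $\mathcal{A}$, horizon $H$); $\Pi_{\mathrm{RNS}}$ randomized non-stationary policies; $d^{M,\pi}_h(x,a)$ is the layer-$h$ state-action occupancy of $\pi$ in $M$, $d^{M,p}_h=\mathbb{E}_{\pi\sim p}d^{M,\pi}_h$. Definitions: $\Psi^M_{h,\varepsilon}(p)=\sup_{\pi\in\Pi}\mathbb{E}^{M,\pi}\big[\frac{d^{M,\pi}_h(x_h,a_h)}{d^{M,p}_h(x_h,a_h)+\varepsilon d^{M,\pi}_h(x_h,a_h)}\big]$; $C^M_{\infty;h}(\mu)=\sup_{\pi\in\Pi}\sup_{(x,a)}\frac{d^{M,\pi}_h(x,a)}{\mu(x,a)}$; $\Psi^M_{\mu;h,\varepsilon}(p)=\sup_{\pi\in\Pi}\mathbb{E}^{M,\pi}\big[\frac{\mu(x_h,a_h)}{d^{M,p}_h(x_h,a_h)+\varepsilon C_\infty\mu(x_h,a_h)}\big]$. *)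

theory Defs
  imports "HOL-Probability.Probability"
begin

text \<open>A known finite-horizon MDP on countable state space 'x and action space 'a.
  Layers are indexed 1..H. trans M h x a is the distribution of x_{h+1}
  given (x_h, a_h) = (x, a).\<close>
record ('x, 'a) mdp =
  init :: "'x pmf"
  trans :: "nat \<Rightarrow> 'x \<Rightarrow> 'a \<Rightarrow> 'x pmf"
  horizon :: nat

text \<open>Randomized non-stationary (Markov) policies: pi h x is the action
  distribution at layer h in state x.  The type of all such policies is Pi_RNS.\<close>
type_synonym ('x, 'a) policy = "nat \<Rightarrow> 'x \<Rightarrow> 'a pmf"

text \<open>Law of the state x_h at layer h (h >= 1); layer 0 is unused.\<close>
fun state_dist :: "('x, 'a) mdp \<Rightarrow> ('x, 'a) policy \<Rightarrow> nat \<Rightarrow> 'x pmf" where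
  "state_dist M \<pi> 0 = init M"
| "state_dist M \<pi> (Suc 0) = init M"
| "state_dist M \<pi> (Suc (Suc n)) =
     bind_pmf (state_dist M \<pi> (Suc n))
       (\<lambda>x. bind_pmf (\<pi> (Suc n) x) (\<lambda>a. trans M (Suc n) x a))"

definition occ :: "('x, 'a) mdp \<Rightarrow> ('x, 'a) policy \<Rightarrow> nat \<Rightarrow> ('x \<times> 'a) pmf" where
  "occ M \<pi> h = bind_pmf (state_dist M \<pi> h) (\<lambda>x. map_pmf (\<lambda>a. (x, a)) (\<pi> h x))"

definition occd :: "('x, 'a) mdp \<Rightarrow> ('x, 'a) policy \<Rightarrow> nat \<Rightarrow> 'x \<times> 'a \<Rightarrow> real" where
  "occd M \<pi> h xa = pmf (occ M \<pi> h) xa"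

definition occd_mix :: "('x, 'a) mdp \<Rightarrow> ('x, 'a) policy pmf \<Rightarrow> nat \<Rightarrow> 'x \<times> 'a \<Rightarrow> real" where
  "occd_mix M p h xa = measure_pmf.expectation p (\<lambda>\<pi>. occd M \<pi> h xa)"

definition expect :: "('x, 'a) mdp \<Rightarrow> ('x, 'a) policy \<Rightarrow> nat \<Rightarrow> ('x \<times> 'a \<Rightarrow> real) \<Rightarrow> real" where
  "expect M \<pi> h f = measure_pmf.expectation (occ M \<pi> h) f"

definition Psi :: "('x, 'a) mdp \<Rightarrow> ('x, 'a) policy set \<Rightarrow> nat \<Rightarrow> real \<Rightarrow> ('x, 'a) policy pmf \<Rightarrow> real" where
  "Psi M Pol h \<epsilon> p = (SUP \<pi>\<in>Pol. expect M \<pi> h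
      (\<lambda>xa. occd M \<pi> h xa / (occd_mix M p h xa + \<epsilon> * occd M \<pi> h xa)))"

text \<open>C^M_{infty;h}(mu) = sup_{pi in Pol} sup_{(x,a)} d^{M,pi}_h(x,a) / mu(x,a), valued in
  the extended reals (a positive quantity over 0 is +infinity, 0/0 = 0).\<close>
definition ratio_ereal :: "real \<Rightarrow> real \<Rightarrow> ereal" where
  "ratio_ereal a b = (if b = 0 then (if a = 0 then 0 else \<infinity>) else ereal (a / b))"

definition Cinf :: "('x, 'a) mdp \<Rightarrow> ('x, 'a) policy set \<Rightarrow> nat \<Rightarrow> ('x \<times> 'a) pmf \<Rightarrow> ereal" where
  "Cinf M Pol h \<mu> = (SUP \<pi>\<in>Pol. SUP xa. ratio_ereal (occd M \<pi> h xa) (pmf \<mu> xa))"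

text \<open>Psi^M_{mu;h,eps}(p), with C = C_infty given as a real parameter.\<close>
definition PsiMu :: "('x, 'a) mdp \<Rightarrow> ('x, 'a) policy set \<Rightarrow> nat \<Rightarrow> real \<Rightarrow> real \<Rightarrow> ('x \<times> 'a) pmf
    \<Rightarrow> ('x, 'a) policy pmf \<Rightarrow> real" where
  "PsiMu M Pol h \<epsilon> C \<mu> p = (SUP \<pi>\<in>Pol. expect M \<pi> h
      (\<lambda>xa. pmf \<mu> xa / (occd_mix M p h xa + \<epsilon> * C * pmf \<mu> xa)))"

definition unif_policies :: "(nat \<Rightarrow> ('x, 'a) policy) \<Rightarrow> nat \<Rightarrow> ('x, 'a) policy pmf" where
  "unif_policies \<pi>s T = pmf_of_multiset (mset (map \<pi>s [1..<T+1]))"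

end

theory Submission
  imports Defs
begin

lemma frac_bound:
  fixes S c m :: real
  assumes "0 \<le> S" "0 < c" "0 \<le> m"
  shows "0 \<le> m / (S + c * m) \<and> m / (S + c * m) \<le> 1 / c"
proof (cases "m = 0")
  case True then show ?thesis using assms by simp
next
  case False
  then have m: "m > 0" using assms by simp
  have "m / (S + c * m) \<le> m / (c * m)"
  proof -
    have cm: "c * m > 0" using assms m by simp
    have pos: "S + c * m > 0" using cm assms by linarith
    have "c * m \<le> S + c * m" using assms by linarith
    then show ?thesis using divide_left_mono[of "c*m" "S + c*m" m] cm pos m by (simp add: mult_pos_pos)
  qed
  also have "\<dots> = 1 / c" using m by simp
  finally show ?thesis using assms m by simp
qed

lemma integ_pmf_bdd:
  fixes g :: "'b \<Rightarrow> real"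
  assumes "\<And>x. \<bar>g x\<bar> \<le> B"
  shows "integrable (measure_pmf q) g"
  by (intro measure_pmf.integrable_const_bound[where B=B]) (auto simp: assms)

lemma exp_count:
  fixes g :: "'b \<Rightarrow> real"
  assumes "\<And>x. \<bar>g x\<bar> \<le> B"
  shows "measure_pmf.expectation q g = (\<integral>x. pmf q x * g x \<partial>count_space UNIV)
    \<and> integrable (count_space UNIV) (\<lambda>x. pmf q x * g x)"
proof
  show "measure_pmf.expectation q g = (\<integral>x. pmf q x * g x \<partial>count_space UNIV)"
    by (subst measure_pmf_eq_density, subst integral_density) auto
  have "integrable (measure_pmf q) g" using integ_pmf_bdd assms by blast
  then have "integrable (density (count_space UNIV) (pmf q)) g"
    by (simp add: measure_pmf_eq_density)
  then show "integrable (count_space UNIV) (\<lambda>x. pmf q x * g x)"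
    by (subst (asm) integrable_density) auto
qed

lemma step_ln:
  fixes D d a :: real
  assumes "0 \<le> D" "0 \<le> d" "d \<le> a" "0 < a"
  shows "d / (D + a) \<le> 2 * (ln (D + d + a) - ln (D + a))"
proof -
  define y where "y = D + a"
  have y: "y > 0" "d \<le> y" using assms by (auto simp: y_def)
  have "ln (y / (y + d)) \<le> y / (y + d) - 1"
    using y assms by (intro ln_le_minus_one) auto
  then have "ln y - ln (y + d) \<le> y / (y + d) - 1"
    using y assms by (simp add: ln_div)
  moreover have "y / (y + d) - 1 = - (d / (y + d))"
    using y assms by (simp add: field_simps)
  moreover have "d / y \<le> 2 * (d / (y + d))"
    using y assms by (simp add: field_simps mult_left_mono)
  ultimately have "d / (y + d) \<le> ln (y + d) - ln y" "d / y \<le> 2 * (d / (y + d))" by linarith+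
  then have "d / y \<le> 2 * (ln (y + d) - ln y)"
    by (meson mult_left_mono order_trans zero_le_numeral)
  then show ?thesis by (simp add: y_def add_ac)
qed

lemma telesc:
  fixes d :: "nat \<Rightarrow> real"
  assumes "0 < a"
  shows "(\<forall>i\<in>{1..n}. 0 \<le> d i \<and> d i \<le> a) \<longrightarrow> (\<Sum>t\<in>{1..n}. d t / ((\<Sum>i\<in>{1..<t}. d i) + a))
     \<le> 2 * (ln ((\<Sum>i\<in>{1..<n+1}. d i) + a) - ln a)"
proof (induction n)
  case 0 then show ?case by simp
next
  case (Suc n)
  show ?case
  proof
    assume A: "\<forall>i\<in>{1..Suc n}. 0 \<le> d i \<and> d i \<le> a"
    then have IH: "(\<Sum>t\<in>{1..n}. d t / ((\<Sum>i\<in>{1..<t}. d i) + a))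
     \<le> 2 * (ln ((\<Sum>i\<in>{1..<n+1}. d i) + a) - ln a)" using Suc by auto
    define D where "D = (\<Sum>i\<in>{1..<Suc n}. d i)"
    have D0: "0 \<le> D" unfolding D_def using A by (intro sum_nonneg) auto
    have e1: "(\<Sum>t\<in>{1..Suc n}. d t / ((\<Sum>i\<in>{1..<t}. d i) + a))
       = (\<Sum>t\<in>{1..n}. d t / ((\<Sum>i\<in>{1..<t}. d i) + a)) + d (Suc n) / (D + a)"
      by (simp add: D_def)
    have e2: "(\<Sum>i\<in>{1..<Suc n + 1}. d i) = D + d (Suc n)"
      by (simp add: D_def)
    have "d (Suc n) / (D + a) \<le> 2 * (ln (D + d (Suc n) + a) - ln (D + a))"
      using A by (intro step_ln[OF D0 _ _ assms(1)]) auto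
    then show "(\<Sum>t\<in>{1..Suc n}. d t / ((\<Sum>i\<in>{1..<t}. d i) + a))
     \<le> 2 * (ln ((\<Sum>i\<in>{1..<Suc n+1}. d i) + a) - ln a)" using IH e1 e2 by (simp add: D_def)
  qed
qed

lemma exp_le_bound:
  fixes g :: "'b \<Rightarrow> real"
  assumes "\<And>x. \<bar>g x\<bar> \<le> B" "\<And>x. g x \<le> B'"
  shows "measure_pmf.expectation q g \<le> B'"
proof -
  have "measure_pmf.expectation q g \<le> measure_pmf.expectation q (\<lambda>_. B')"
  proof (rule integral_mono)
    show "integrable (measure_pmf q) g" using assms(1) by (rule integ_pmf_bdd)
  qed (use assms in auto)
  then show ?thesis by simp
qed

lemma mono_frac:
  fixes m x y e :: real
  assumes "0 \<le> m" "0 \<le> x" "x \<le> y" "0 < e"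
  shows "x / (m + e * x) \<le> y / (m + e * y)"
proof (cases "x = 0")
  case True then show ?thesis using assms by simp
next
  case False
  then have x: "x > 0" using assms by simp
  then have y: "y > 0" using assms by simp
  have p1: "m + e * x > 0" using x assms by (simp add: add_nonneg_pos)
  have p2: "m + e * y > 0" using y assms by (simp add: add_nonneg_pos)
  have "x * (m + e * y) \<le> y * (m + e * x)"
    using assms by (simp add: algebra_simps mult_left_mono)
  then show ?thesis using p1 p2 by (simp add: divide_simps)
qed

lemma lin_aux: "(A::real) \<le> 2 * (B - c) \<Longrightarrow> B \<le> L + c \<Longrightarrow> A \<le> 2 * L"
  by (simp add: algebra_simps)

lemma unif_eq:
  "unif_policies \<pi>s T = map_pmf \<pi>s (pmf_of_set {1..<T+1})" if "1 \<le> T"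
proof -
  have "map_pmf \<pi>s (pmf_of_set {1..<T+1}) = pmf_of_multiset (image_mset \<pi>s (mset_set {1..<T+1}))"
    using that by (intro map_pmf_of_set) auto
  moreover have "unif_policies \<pi>s T = pmf_of_multiset (image_mset \<pi>s (mset_set {1..<T+1}))"
    unfolding unif_policies_def by (simp only: mset_map mset_upt)
  ultimately show ?thesis by simp
qed

lemma occd_mix_unif:
  assumes "1 \<le> T"
  shows "occd_mix M (unif_policies \<pi>s T) h xa = (\<Sum>i\<in>{1..<T+1}. occd M (\<pi>s i) h xa) / real T"
  unfolding occd_mix_def unif_eq[OF assms]
  using assms by (simp add: integral_pmf_of_set)

lemma C_facts:
  fixes M :: "('x::countable, 'a::countable) mdp"
  assumes "Cinf M Pol h \<mu> < \<infinity>" "\<pi>0 \<in> Pol"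
  shows "real_of_ereal (Cinf M Pol h \<mu>) > 0
    \<and> (\<forall>\<pi>\<in>Pol. \<forall>xa. occd M \<pi> h xa \<le> real_of_ereal (Cinf M Pol h \<mu>) * pmf \<mu> xa)"
proof -
  define C where "C = real_of_ereal (Cinf M Pol h \<mu>)"
  have le: "ratio_ereal (occd M \<pi> h xa) (pmf \<mu> xa) \<le> Cinf M Pol h \<mu>" if "\<pi> \<in> Pol" for \<pi> xa
    unfolding Cinf_def using that by (intro SUP_upper2[of \<pi>]) (auto intro: SUP_upper)
  have nn: "ratio_ereal (occd M \<pi> h xa) (pmf \<mu> xa) \<ge> 0" for \<pi> xa
    by (auto simp: ratio_ereal_def occd_def)
  have "Cinf M Pol h \<mu> \<ge> 0" using le[OF assms(2)] nn order_trans by blast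
  then have Ceq: "Cinf M Pol h \<mu> = ereal C" unfolding C_def using assms(1)
    by (cases "Cinf M Pol h \<mu>") auto
  have bnd: "occd M \<pi> h xa \<le> C * pmf \<mu> xa" if "\<pi> \<in> Pol" for \<pi> xa
  proof (cases "pmf \<mu> xa = 0")
    case True
    then have "occd M \<pi> h xa = 0" using le[OF that, of xa] Ceq
      by (auto simp: ratio_ereal_def split: if_splits)
    then show ?thesis using True by simp
  next
    case False
    then have p: "pmf \<mu> xa > 0" using pmf_nonneg[of \<mu> xa] by linarith
    have "occd M \<pi> h xa / pmf \<mu> xa \<le> C" using le[OF that, of xa] Ceq False
      by (auto simp: ratio_ereal_def)
    then show ?thesis using p by (simp add: pos_divide_le_eq)
  qed
  obtain xa where xa: "xa \<in> set_pmf (occ M \<pi>0 h)" by (meson ex_in_conv set_pmf_not_empty)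
  have "occd M \<pi>0 h xa > 0" using xa by (simp add: occd_def pmf_positive)
  then have "0 < C * pmf \<mu> xa" using bnd[OF assms(2), of xa] by linarith
  then have "C > 0" using pmf_nonneg[of \<mu> xa] by (metis mult_nonpos_nonneg not_le)
  then show ?thesis using bnd unfolding C_def by blast
qed

theorem theorem4p2:
  fixes M :: "('x::countable, 'a::countable) mdp"
    and Pol :: "('x, 'a) policy set"
    and \<epsilon> \<epsilon>opt :: real
    and h T :: nat
    and \<mu> :: "('x \<times> 'a) pmf"
    and \<pi>s :: "nat \<Rightarrow> ('x, 'a) policy"
  assumes h: "1 \<le> h" "h \<le> horizon M"
    and T: "1 \<le> T" "\<epsilon> = 1 / real T"
    and Cfin: "Cinf M Pol h \<mu> < \<infinity>"
    and opt: "\<forall>t\<in>{1..T}. \<pi>s t \<in> Pol \<and>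
        expect M (\<pi>s t) h (\<lambda>xa. pmf \<mu> xa /
            ((\<Sum>i\<in>{1..<t}. occd M (\<pi>s i) h xa) + real_of_ereal (Cinf M Pol h \<mu>) * pmf \<mu> xa))
        \<ge> (SUP \<pi>\<in>Pol. expect M \<pi> h (\<lambda>xa. pmf \<mu> xa /
            ((\<Sum>i\<in>{1..<t}. occd M (\<pi>s i) h xa) + real_of_ereal (Cinf M Pol h \<mu>) * pmf \<mu> xa)))
          - \<epsilon>opt"
    and eopt: "\<epsilon>opt \<le> \<epsilon> * ln (2 / \<epsilon>)"
  shows "set_pmf (unif_policies \<pi>s T) \<subseteq> Pol
    \<and> real (card (set_pmf (unif_policies \<pi>s T))) \<le> 1 / \<epsilon>
    \<and> PsiMu M Pol h \<epsilon> (real_of_ereal (Cinf M Pol h \<mu>)) \<mu> (unif_policies \<pi>s T) \<le> 3 * ln (2 / \<epsilon>)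
    \<and> Psi M Pol h \<epsilon> (unif_policies \<pi>s T) \<le> 6 * real_of_ereal (Cinf M Pol h \<mu>) * ln (2 / \<epsilon>)"
proof -
  define C where "C = real_of_ereal (Cinf M Pol h \<mu>)"
  define d where "d = (\<lambda>i xa. occd M (\<pi>s i) h xa)"
  define D where "D = (\<lambda>t xa. \<Sum>i\<in>{1..<t}. d i xa)"
  define f where "f = (\<lambda>t xa. pmf \<mu> xa / (D t xa + C * pmf \<mu> xa))"
  define p where "p = unif_policies \<pi>s T"
  have Tpos: "real T > 0" using T by simp
  have twoe: "2 / \<epsilon> = 2 * real T" using T by simp
  have inPol: "\<pi>s t \<in> Pol" if "t \<in> {1..T}" for t using opt that by blast
  have PolNE: "Pol \<noteq> {}" using inPol[of 1] T by auto
  have CF: "C > 0 \<and> (\<forall>\<pi>\<in>Pol. \<forall>xa. occd M \<pi> h xa \<le> C * pmf \<mu> xa)"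
    unfolding C_def using C_facts[OF Cfin inPol[of 1]] T by auto
  then have Cpos: "C > 0" and bnd: "\<And>\<pi> xa. \<pi> \<in> Pol \<Longrightarrow> occd M \<pi> h xa \<le> C * pmf \<mu> xa"
    by auto
  have d0: "0 \<le> d i xa" for i xa by (simp add: d_def occd_def)
  have D0: "0 \<le> D t xa" for t xa unfolding D_def using d0 by (intro sum_nonneg) auto
  have fb: "0 \<le> f t xa \<and> f t xa \<le> 1 / C" for t xa
    unfolding f_def using frac_bound[OF D0[of t xa] Cpos pmf_nonneg[of \<mu> xa]] by blast
  have fabs: "\<bar>f t xa\<bar> \<le> 1 / C" for t xa using fb[of t xa] by simp
  have opt': "expect M (\<pi>s t) h (f t) \<ge> (SUP \<pi>\<in>Pol. expect M \<pi> h (f t)) - \<epsilon>opt"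
    if "t \<in> {1..T}" for t
    using opt that unfolding f_def D_def d_def C_def by blast
  have mix: "occd_mix M p h xa = D (T+1) xa / real T" for xa
    unfolding p_def D_def d_def by (rule occd_mix_unif[OF T(1)])
  have psimu_int: "pmf \<mu> xa / (occd_mix M p h xa + \<epsilon> * C * pmf \<mu> xa) = real T * f (T+1) xa" for xa
  proof -
    have "occd_mix M p h xa + \<epsilon> * C * pmf \<mu> xa = (D (T+1) xa + C * pmf \<mu> xa) / real T"
      using Tpos by (simp add: mix T(2) field_simps)
    then show ?thesis unfolding f_def by simp
  qed
  have key: "real T * expect M \<pi> h (f (T+1)) \<le> 3 * ln (2 * real T)" if \<pi>: "\<pi> \<in> Pol" for \<pi>
  proof -
    have step: "expect M \<pi> h (f (T+1)) \<le> expect M (\<pi>s t) h (f t) + \<epsilon>opt" if t: "t \<in> {1..T}" for t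
    proof -
      have DD: "D t xa \<le> D (T+1) xa" for xa unfolding D_def using t d0 by (intro sum_mono2) auto
      have ff: "f (T+1) xa \<le> f t xa" for xa
      proof (cases "pmf \<mu> xa = 0")
        case True then show ?thesis by (simp add: f_def)
      next
        case False
        then have "pmf \<mu> xa > 0" using pmf_nonneg[of \<mu> xa] by linarith
        then have q1: "D t xa + C * pmf \<mu> xa > 0" using D0[of t xa] Cpos by (simp add: add_nonneg_pos)
        then have q2: "D (T+1) xa + C * pmf \<mu> xa > 0" using DD[of xa] by linarith
        have q3: "0 < (D (T+1) xa + C * pmf \<mu> xa) * (D t xa + C * pmf \<mu> xa)"
          using q2 q1 by (rule mult_pos_pos)
        show ?thesis unfolding f_def using DD[of xa] pmf_nonneg[of \<mu> xa] q3
          by (intro divide_left_mono) auto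
      qed
      have "expect M \<pi> h (f (T+1)) \<le> expect M \<pi> h (f t)"
        unfolding expect_def
      proof (rule integral_mono)
        show "integrable (measure_pmf (occ M \<pi> h)) (f (T + 1))" using fabs by (rule integ_pmf_bdd)
        show "integrable (measure_pmf (occ M \<pi> h)) (f t)" using fabs by (rule integ_pmf_bdd)
      qed (use ff in auto)
      also have "\<dots> \<le> (SUP \<pi>\<in>Pol. expect M \<pi> h (f t))"
      proof (rule cSUP_upper[OF \<pi>])
        have "expect M \<pi>' h (f t) \<le> 1 / C" for \<pi>'
          unfolding expect_def by (rule exp_le_bound[where B="1/C"]) (use fabs fb in auto)
        then show "bdd_above ((\<lambda>\<pi>. expect M \<pi> h (f t)) ` Pol)"
          by (intro bdd_aboveI2[where M="1/C"]) auto
      qed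
      also have "\<dots> \<le> expect M (\<pi>s t) h (f t) + \<epsilon>opt" using opt'[OF t] by linarith
      finally show ?thesis .
    qed
    have sumstep: "real T * expect M \<pi> h (f (T+1)) \<le> (\<Sum>t\<in>{1..T}. expect M (\<pi>s t) h (f t)) + real T * \<epsilon>opt"
    proof -
      have "(\<Sum>t\<in>{1..T}. expect M \<pi> h (f (T+1))) \<le> (\<Sum>t\<in>{1..T}. expect M (\<pi>s t) h (f t) + \<epsilon>opt)"
        using step by (intro sum_mono) auto
      then show ?thesis by (simp add: sum.distrib)
    qed
    have pw: "(\<Sum>t\<in>{1..T}. d t x * f t x) \<le> pmf \<mu> x * (2 * ln (real T + 1))" for x
    proof (cases "pmf \<mu> x = 0")
      case True then show ?thesis by (simp add: f_def)
    next
      case False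
      define a where "a = C * pmf \<mu> x"
      have mpos: "pmf \<mu> x > 0" using False pmf_nonneg[of \<mu> x] by linarith
      then have apos: "a > 0" unfolding a_def using Cpos by simp
      have eq: "(\<Sum>t\<in>{1..T}. d t x * f t x) = pmf \<mu> x * (\<Sum>t\<in>{1..T}. d t x / ((\<Sum>i\<in>{1..<t}. d i x) + a))"
        unfolding f_def D_def a_def by (simp add: sum_distrib_left ac_simps)
      have da: "\<forall>i\<in>{1..T}. 0 \<le> d i x \<and> d i x \<le> a"
        using d0 bnd inPol unfolding a_def d_def by blast
      have tel: "(\<Sum>t\<in>{1..T}. d t x / ((\<Sum>i\<in>{1..<t}. d i x) + a))
          \<le> 2 * (ln ((\<Sum>i\<in>{1..<T+1}. d i x) + a) - ln a)"
        using telesc[OF apos, where d="\<lambda>i. d i x" and n=T] da by simp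
      have "(\<Sum>i\<in>{1..<T+1}. d i x) \<le> of_nat (card {1..<T+1}) * a"
        using da by (intro sum_bounded_above) auto
      then have "(\<Sum>i\<in>{1..<T+1}. d i x) + a \<le> (real T + 1) * a" by (simp add: algebra_simps)
      moreover have "(\<Sum>i\<in>{1..<T+1}. d i x) + a > 0" using apos d0 by (simp add: add_nonneg_pos sum_nonneg)
      ultimately have "ln ((\<Sum>i\<in>{1..<T+1}. d i x) + a) \<le> ln ((real T + 1) * a)"
        by (subst ln_le_cancel_iff) auto
      also have "\<dots> = ln (real T + 1) + ln a" using apos by (simp add: ln_mult)
      finally have "(\<Sum>t\<in>{1..T}. d t x / ((\<Sum>i\<in>{1..<t}. d i x) + a)) \<le> 2 * ln (real T + 1)"
        using tel by (metis (no_types) lin_aux)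
      then show ?thesis unfolding eq using mpos by (intro mult_left_mono) auto
    qed
    have pot: "(\<Sum>t\<in>{1..T}. expect M (\<pi>s t) h (f t)) \<le> 2 * ln (real T + 1)"
    proof -
      have ex: "expect M (\<pi>s t) h (f t) = (\<integral>x. d t x * f t x \<partial>count_space UNIV)
          \<and> integrable (count_space UNIV) (\<lambda>x. d t x * f t x)" for t
        using exp_count[of "f t" "1/C" "occ M (\<pi>s t) h"] fabs unfolding expect_def d_def occd_def by auto
      have "(\<Sum>t\<in>{1..T}. expect M (\<pi>s t) h (f t)) = (\<integral>x. (\<Sum>t\<in>{1..T}. d t x * f t x) \<partial>count_space UNIV)"
      proof -
        have "(\<integral>x. (\<Sum>t\<in>{1..T}. d t x * f t x) \<partial>count_space UNIV)
            = (\<Sum>t\<in>{1..T}. (\<integral>x. d t x * f t x \<partial>count_space UNIV))"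
          by (rule Bochner_Integration.integral_sum[where f="\<lambda>t x. d t x * f t x"]) (use ex in blast)
        then show ?thesis using ex by simp
      qed
      also have "\<dots> \<le> (\<integral>x. pmf \<mu> x * (2 * ln (real T + 1)) \<partial>count_space UNIV)"
      proof (rule integral_mono)
        show "integrable (count_space UNIV) (\<lambda>x. \<Sum>t\<in>{1..T}. d t x * f t x)"
          by (rule Bochner_Integration.integrable_sum[where f="\<lambda>t x. d t x * f t x"]) (use ex in blast)
        show "integrable (count_space UNIV) (\<lambda>x. pmf \<mu> x * (2 * ln (real T + 1)))"
          by (intro integrable_mult_left integrable_pmf)
      qed (use pw in auto)
      also have "\<dots> = 2 * ln (real T + 1)"
        by (simp add: integral_pmf)
      finally show ?thesis .
    qed
    have "real T * \<epsilon>opt \<le> real T * (\<epsilon> * ln (2 / \<epsilon>))" using eopt Tpos by simp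
    also have "\<dots> = ln (2 * real T)" using Tpos by (simp add: T(2) twoe)
    finally have e1: "real T * \<epsilon>opt \<le> ln (2 * real T)" .
    have "ln (real T + 1) \<le> ln (2 * real T)" using T(1) by (subst ln_le_cancel_iff) auto
    then show ?thesis using sumstep pot e1 by linarith
  qed
  have psimu: "expect M \<pi> h (\<lambda>xa. pmf \<mu> xa / (occd_mix M p h xa + \<epsilon> * C * pmf \<mu> xa))
      \<le> 3 * ln (2 * real T)" if "\<pi> \<in> Pol" for \<pi>
    using key[OF that] unfolding psimu_int expect_def by simp
  have psi: "expect M \<pi> h (\<lambda>xa. occd M \<pi> h xa / (occd_mix M p h xa + \<epsilon> * occd M \<pi> h xa))
      \<le> 6 * C * ln (2 * real T)" if \<pi>: "\<pi> \<in> Pol" for \<pi>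
  proof -
    have epos: "\<epsilon> > 0" using T by simp
    have m0: "0 \<le> occd_mix M p h xa" for xa unfolding mix using D0 Tpos by simp
    have o0: "0 \<le> occd M \<pi> h xa" for xa by (simp add: occd_def)
    have pw: "occd M \<pi> h xa / (occd_mix M p h xa + \<epsilon> * occd M \<pi> h xa) \<le> C * (real T * f (T+1) xa)" for xa
    proof -
      have "occd M \<pi> h xa / (occd_mix M p h xa + \<epsilon> * occd M \<pi> h xa)
          \<le> (C * pmf \<mu> xa) / (occd_mix M p h xa + \<epsilon> * (C * pmf \<mu> xa))"
        by (rule mono_frac[OF m0 o0 bnd[OF \<pi>] epos])
      also have "\<dots> = C * (pmf \<mu> xa / (occd_mix M p h xa + \<epsilon> * C * pmf \<mu> xa))"
        by (simp add: ac_simps)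
      finally show ?thesis unfolding psimu_int .
    qed
    have "expect M \<pi> h (\<lambda>xa. occd M \<pi> h xa / (occd_mix M p h xa + \<epsilon> * occd M \<pi> h xa))
        \<le> expect M \<pi> h (\<lambda>xa. C * (real T * f (T+1) xa))"
      unfolding expect_def
    proof (rule integral_mono)
      show "integrable (measure_pmf (occ M \<pi> h)) (\<lambda>xa. occd M \<pi> h xa / (occd_mix M p h xa + \<epsilon> * occd M \<pi> h xa))"
      proof (rule integ_pmf_bdd[where B="1/\<epsilon>"])
        fix xa
        show "\<bar>occd M \<pi> h xa / (occd_mix M p h xa + \<epsilon> * occd M \<pi> h xa)\<bar> \<le> 1 / \<epsilon>"
          using frac_bound[OF m0[of xa] epos o0[of xa]] by (metis abs_of_nonneg)
      qed
      show "integrable (measure_pmf (occ M \<pi> h)) (\<lambda>xa. C * (real T * f (T+1) xa))"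
        using fabs by (intro integrable_mult_right integ_pmf_bdd) 
    qed (use pw in auto)
    also have "\<dots> = C * (real T * expect M \<pi> h (f (T+1)))" by (simp add: expect_def)
    also have "\<dots> \<le> C * (3 * ln (2 * real T))" using key[OF \<pi>] Cpos by (intro mult_left_mono) auto
    also have "\<dots> \<le> 6 * C * ln (2 * real T)"
    proof -
      have "ln (2 * real T) \<ge> 0" using T(1) by simp
      then show ?thesis using Cpos by (simp add: mult_nonneg_nonneg)
    qed
    finally show ?thesis .
  qed
  have setp: "set_pmf p = \<pi>s ` {1..<T+1}" unfolding p_def unif_eq[OF T(1)] using T by simp
  show ?thesis
  proof (intro conjI)
    show "set_pmf (unif_policies \<pi>s T) \<subseteq> Pol" using setp inPol unfolding p_def by auto
    have "card (set_pmf p) \<le> T" unfolding setp using card_image_le[of "{1..<T+1}" \<pi>s] by simp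
    then show "real (card (set_pmf (unif_policies \<pi>s T))) \<le> 1 / \<epsilon>" using T unfolding p_def by simp
    show "PsiMu M Pol h \<epsilon> (real_of_ereal (Cinf M Pol h \<mu>)) \<mu> (unif_policies \<pi>s T) \<le> 3 * ln (2 / \<epsilon>)"
      unfolding PsiMu_def twoe C_def[symmetric] p_def[symmetric]
      using psimu PolNE by (intro cSUP_least) auto
    show "Psi M Pol h \<epsilon> (unif_policies \<pi>s T) \<le> 6 * real_of_ereal (Cinf M Pol h \<mu>) * ln (2 / \<epsilon>)"
      unfolding Psi_def twoe C_def[symmetric] p_def[symmetric]
      using psi PolNE by (intro cSUP_least) auto
  qed
qed

end
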